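(* Let $\Gamma_{\ge1}$ be a set of letters of arity at least $1$ and $\Gamma_0$ a set of constants, and consider the following nondeterministic procedure on a context equation $u=v$. (1) For each variable $x$: guess whether $x$ is to be replaced by a constant and if so guess a constant $c\in\Gamma_0$ and replace every occurrence of $x$ by $c$. (2) For each context variable $X$: guess a letter $f$ (intended as the last letter of $\sigma(X)$); if $f\in\Gamma_{\ge1}$ and the current equation contains a subterm $X(a)$ with $a\in\Gamma_0$, let $m=\mathrm{ar}(f)$, guess $1\le i\le m$, and replace every subterm $X(s)$ by $X(f(x_1,\dots,x_{i-1},s,x_{i+1},\dots,x_m))$ with fresh variables $x_1,\dots,x_{i-1},x_{i+1},\dots,x_m$ (the same for all occurrences of $X$); then guess whether $X$ is removed, in which case replace each $X(s)$ by $s$. (3) For each variable introduced in step (2), act as in step (1). Then: (a) whatever the choices, if the resulting equation $u'=v'$ has a solution, so does $u=v$; (b) if $u=v$ has a non-empty solution $\sigma$, then for some choices the resulting equation $u'=v'$ has a non-empty solution $\sigma'$ such that $\sigma'(u')=\sigma(u)$ and there is no crossing father-leaf pair $(f,a)$ with $f\in\Gamma_{\ge1}$ and $a\in\Gamma_0$ with respect to $\sigma'$.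
   Context: $\Sigma$ is a ranked signature, $\Omega\notin\Sigma$ a special constant; context variables have arity $1$, variables arity $0$. Ground terms, ground contexts (exactly one $\Omega$), terms and context equations $u=v$ are as usual; a substitution $\sigma$ assigns ground contexts to context variables and ground terms to variables, extended by $\sigma(a)=a$, $\sigma(f(t_1,\dots,t_m))=f(\sigma(t_1),\dots,\sigma(t_m))$, $\sigma(Xt)=\sigma(X)\sigma(t)$; a solution satisfies $\sigma(u)=\sigma(v)$; it is non-empty if $\sigma(X)\neq\Omega$ for every context variable $X$ occurring in the equation. The last letter of $\sigma(X)$ is the label of the father of $\Omega$ in $\sigma(X)$. Each node of $\sigma(u)$ comes either from an explicit letter occurrence of $u$ or from $\sigma(X)$ or $\sigma(x)$ for a particular occurrence of $X$ or $x$. An occurrence in $\sigma(u)$ or $\sigma(v)$ of a node labelled $f$ ($\mathrm{ar}(f)\ge1$) with a child labelled by a constant $a$ is explicit if both come from explicit letters, implicit if both come from the same $\sigma(X)$ or $\sigma(x)$, and crossing otherwise; $(f,a)$ is a crossing father-leaf pair w.r.t. $\sigma$ if it has a crossing occurrence. *)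

theory Defs
  imports Main
begin

text \<open>Letters have type 'f, with arity function ar passed explicitly. Variables have type 'v,
  context variables have type 'c. CApp X t stands for the term X(t).\<close>

datatype ('f,'v,'c) trm = Fun 'f "('f,'v,'c) trm list" | Var 'v | CApp 'c "('f,'v,'c) trm"

datatype 'f gterm = GFun 'f "'f gterm list"

text \<open>Ground contexts: Hole is the constant Omega; GCtx f l C r is f(l, C, r).\<close>
datatype 'f gctxt = Hole | GCtx 'f "'f gterm list" "'f gctxt" "'f gterm list"

fun wf_trm :: "('f \<Rightarrow> nat) \<Rightarrow> ('f,'v,'c) trm \<Rightarrow> bool" where
  "wf_trm ar (Fun f ts) = (length ts = ar f \<and> (\<forall>t\<in>set ts. wf_trm ar t))"
| "wf_trm ar (Var x) = True"
| "wf_trm ar (CApp X t) = wf_trm ar t"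

fun wf_gterm :: "('f \<Rightarrow> nat) \<Rightarrow> 'f gterm \<Rightarrow> bool" where
  "wf_gterm ar (GFun f ts) = (length ts = ar f \<and> (\<forall>t\<in>set ts. wf_gterm ar t))"

fun wf_gctxt :: "('f \<Rightarrow> nat) \<Rightarrow> 'f gctxt \<Rightarrow> bool" where
  "wf_gctxt ar Hole = True"
| "wf_gctxt ar (GCtx f l C r) = (length l + 1 + length r = ar f \<and>
      (\<forall>t\<in>set l. wf_gterm ar t) \<and> wf_gctxt ar C \<and> (\<forall>t\<in>set r. wf_gterm ar t))"

fun cfill :: "'f gctxt \<Rightarrow> 'f gterm \<Rightarrow> 'f gterm" where
  "cfill Hole t = t"
| "cfill (GCtx f l C r) t = GFun f (l @ [cfill C t] @ r)"

fun vars :: "('f,'v,'c) trm \<Rightarrow> 'v set" where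
  "vars (Fun f ts) = \<Union> (set (map vars ts))"
| "vars (Var x) = {x}"
| "vars (CApp X t) = vars t"

fun cvars :: "('f,'v,'c) trm \<Rightarrow> 'c set" where
  "cvars (Fun f ts) = \<Union> (set (map cvars ts))"
| "cvars (Var x) = {}"
| "cvars (CApp X t) = insert X (cvars t)"

fun subterms :: "('f,'v,'c) trm \<Rightarrow> ('f,'v,'c) trm set" where
  "subterms (Fun f ts) = insert (Fun f ts) (\<Union> (set (map subterms ts)))"
| "subterms (Var x) = {Var x}"
| "subterms (CApp X t) = insert (CApp X t) (subterms t)"

type_synonym ('f,'v,'c) equation = "('f,'v,'c) trm \<times> ('f,'v,'c) trm"

definition vars_eq :: "('f,'v,'c) equation \<Rightarrow> 'v set" where
  "vars_eq e = vars (fst e) \<union> vars (snd e)"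

definition cvars_eq :: "('f,'v,'c) equation \<Rightarrow> 'c set" where
  "cvars_eq e = cvars (fst e) \<union> cvars (snd e)"

definition subterms_eq :: "('f,'v,'c) equation \<Rightarrow> ('f,'v,'c) trm set" where
  "subterms_eq e = subterms (fst e) \<union> subterms (snd e)"

definition map_eq :: "(('f,'v,'c) trm \<Rightarrow> ('f,'v,'c) trm) \<Rightarrow> ('f,'v,'c) equation \<Rightarrow> ('f,'v,'c) equation" where
  "map_eq g e = (g (fst e), g (snd e))"

text \<open>A substitution is a pair (sc, sv): sc assigns ground contexts to context variables,
  sv assigns ground terms to variables.\<close>

fun gsubst :: "('c \<Rightarrow> 'f gctxt) \<Rightarrow> ('v \<Rightarrow> 'f gterm) \<Rightarrow> ('f,'v,'c) trm \<Rightarrow> 'f gterm" where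
  "gsubst sc sv (Fun f ts) = GFun f (map (gsubst sc sv) ts)"
| "gsubst sc sv (Var x) = sv x"
| "gsubst sc sv (CApp X t) = cfill (sc X) (gsubst sc sv t)"

definition wf_subst :: "('f \<Rightarrow> nat) \<Rightarrow> ('c \<Rightarrow> 'f gctxt) \<Rightarrow> ('v \<Rightarrow> 'f gterm) \<Rightarrow> bool" where
  "wf_subst ar sc sv \<longleftrightarrow> (\<forall>X. wf_gctxt ar (sc X)) \<and> (\<forall>x. wf_gterm ar (sv x))"

definition is_solution :: "('f \<Rightarrow> nat) \<Rightarrow> ('c \<Rightarrow> 'f gctxt) \<Rightarrow> ('v \<Rightarrow> 'f gterm)
    \<Rightarrow> ('f,'v,'c) equation \<Rightarrow> bool" where
  "is_solution ar sc sv e \<longleftrightarrow> wf_subst ar sc sv \<and> gsubst sc sv (fst e) = gsubst sc sv (snd e)"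

definition nonempty_sol :: "('c \<Rightarrow> 'f gctxt) \<Rightarrow> ('f,'v,'c) equation \<Rightarrow> bool" where
  "nonempty_sol sc e \<longleftrightarrow> (\<forall>X\<in>cvars_eq e. sc X \<noteq> Hole)"

text \<open>Origin of a node of sigma(u) / sigma(v): an explicit letter, or the occurrence of a
  variable / context variable at position p in side s (True = u, False = v).\<close>
datatype orig = Expl | Occ bool "nat list"

datatype 'f atree = ANode 'f orig "'f atree list"

fun lab :: "orig \<Rightarrow> 'f gterm \<Rightarrow> 'f atree" where
  "lab o' (GFun f ts) = ANode f o' (map (lab o') ts)"

fun fill_lab :: "orig \<Rightarrow> 'f gctxt \<Rightarrow> 'f atree \<Rightarrow> 'f atree" where
  "fill_lab o' Hole t = t"
| "fill_lab o' (GCtx f l C r) t = ANode f o' (map (lab o') l @ [fill_lab o' C t] @ map (lab o') r)"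

fun aeval :: "('c \<Rightarrow> 'f gctxt) \<Rightarrow> ('v \<Rightarrow> 'f gterm) \<Rightarrow> bool \<Rightarrow> nat list \<Rightarrow> ('f,'v,'c) trm \<Rightarrow> 'f atree"
and aevals :: "('c \<Rightarrow> 'f gctxt) \<Rightarrow> ('v \<Rightarrow> 'f gterm) \<Rightarrow> bool \<Rightarrow> nat list \<Rightarrow> nat \<Rightarrow> ('f,'v,'c) trm list \<Rightarrow> 'f atree list" where
  "aeval sc sv s p (Fun f ts) = ANode f Expl (aevals sc sv s p 0 ts)"
| "aeval sc sv s p (Var x) = lab (Occ s p) (sv x)"
| "aeval sc sv s p (CApp X t) = fill_lab (Occ s p) (sc X) (aeval sc sv s (p @ [0]) t)"
| "aevals sc sv s p i [] = []"
| "aevals sc sv s p i (t # ts) = aeval sc sv s (p @ [i]) t # aevals sc sv s p (Suc i) ts"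

fun asubtrees :: "'f atree \<Rightarrow> 'f atree set" where
  "asubtrees (ANode f o' ts) = insert (ANode f o' ts) (\<Union> (set (map asubtrees ts)))"

text \<open>A crossing occurrence: a node labelled f (arity at least 1) with a child labelled by a
  constant a, the two nodes having different origins (neither both explicit nor both coming
  from the same occurrence of a (context) variable).\<close>
definition crossing_occ :: "('f \<Rightarrow> nat) \<Rightarrow> 'f atree \<Rightarrow> 'f \<Rightarrow> 'f \<Rightarrow> bool" where
  "crossing_occ ar T f a \<longleftrightarrow> 1 \<le> ar f \<and> ar a = 0 \<and>
     (\<exists>o1 cs. ANode f o1 cs \<in> asubtrees T \<and> (\<exists>o2 ds. ANode a o2 ds \<in> set cs \<and> o1 \<noteq> o2))"

definition crossing_pair :: "('f \<Rightarrow> nat) \<Rightarrow> ('c \<Rightarrow> 'f gctxt) \<Rightarrow> ('v \<Rightarrow> 'f gterm)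
    \<Rightarrow> ('f,'v,'c) equation \<Rightarrow> 'f \<Rightarrow> 'f \<Rightarrow> bool" where
  "crossing_pair ar sc sv e f a \<longleftrightarrow>
     crossing_occ ar (aeval sc sv True [] (fst e)) f a \<or> crossing_occ ar (aeval sc sv False [] (snd e)) f a"

fun repl_vars :: "('v \<Rightarrow> 'f option) \<Rightarrow> ('f,'v,'c) trm \<Rightarrow> ('f,'v,'c) trm" where
  "repl_vars \<rho> (Fun f ts) = Fun f (map (repl_vars \<rho>) ts)"
| "repl_vars \<rho> (Var x) = (case \<rho> x of None \<Rightarrow> Var x | Some c \<Rightarrow> Fun c [])"
| "repl_vars \<rho> (CApp X t) = CApp X (repl_vars \<rho> t)"

fun pop_ctx :: "'c \<Rightarrow> 'f \<Rightarrow> 'v list \<Rightarrow> 'v list \<Rightarrow> ('f,'v,'c) trm \<Rightarrow> ('f,'v,'c) trm" where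
  "pop_ctx X f xs1 xs2 (Fun g ts) = Fun g (map (pop_ctx X f xs1 xs2) ts)"
| "pop_ctx X f xs1 xs2 (Var x) = Var x"
| "pop_ctx X f xs1 xs2 (CApp Y t) =
     (if Y = X then CApp X (Fun f (map Var xs1 @ [pop_ctx X f xs1 xs2 t] @ map Var xs2))
      else CApp Y (pop_ctx X f xs1 xs2 t))"

fun remove_ctx :: "'c \<Rightarrow> ('f,'v,'c) trm \<Rightarrow> ('f,'v,'c) trm" where
  "remove_ctx X (Fun g ts) = Fun g (map (remove_ctx X) ts)"
| "remove_ctx X (Var x) = Var x"
| "remove_ctx X (CApp Y t) = (if Y = X then remove_ctx X t else CApp Y (remove_ctx X t))"

text \<open>Step (2) for a single context variable X on the current equation e; V is the set of
  variables of the original equation (fresh variables avoid V and the current equation).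
  Either nothing is popped (the guessed letter is not in G1 / no subterm X(a)), or a letter
  f in G1 is popped at argument position length xs1 + 1, provided some X(a), a in G0, occurs.\<close>
definition pop_step :: "('f \<Rightarrow> nat) \<Rightarrow> 'f set \<Rightarrow> 'f set \<Rightarrow> 'v set \<Rightarrow> 'c
    \<Rightarrow> ('f,'v,'c) equation \<Rightarrow> ('f,'v,'c) equation \<Rightarrow> bool" where
  "pop_step ar G1 G0 V X e e' \<longleftrightarrow> e' = e \<or>
     (\<exists>f xs1 xs2 a. f \<in> G1 \<and> a \<in> G0 \<and> CApp X (Fun a []) \<in> subterms_eq e \<and>
        length xs1 + 1 + length xs2 = ar f \<and> distinct (xs1 @ xs2) \<and>
        set (xs1 @ xs2) \<inter> (V \<union> vars_eq e) = {} \<and>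
        e' = map_eq (pop_ctx X f xs1 xs2) e)"

definition cvar_step :: "('f \<Rightarrow> nat) \<Rightarrow> 'f set \<Rightarrow> 'f set \<Rightarrow> 'v set \<Rightarrow> 'c
    \<Rightarrow> ('f,'v,'c) equation \<Rightarrow> ('f,'v,'c) equation \<Rightarrow> bool" where
  "cvar_step ar G1 G0 V X e e'' \<longleftrightarrow>
     (\<exists>e'. pop_step ar G1 G0 V X e e' \<and> (e'' = e' \<or> e'' = map_eq (remove_ctx X) e'))"

fun cvar_steps :: "('f \<Rightarrow> nat) \<Rightarrow> 'f set \<Rightarrow> 'f set \<Rightarrow> 'v set \<Rightarrow> 'c list
    \<Rightarrow> ('f,'v,'c) equation \<Rightarrow> ('f,'v,'c) equation \<Rightarrow> bool" where
  "cvar_steps ar G1 G0 V [] e e' = (e' = e)"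
| "cvar_steps ar G1 G0 V (X # Xs) e e'' = (\<exists>e'. cvar_step ar G1 G0 V X e e' \<and> cvar_steps ar G1 G0 V Xs e' e'')"

text \<open>The whole procedure: e' is a possible outcome on input e. The context variables are
  processed one after another, in some (guessed) order.\<close>
definition proc :: "('f \<Rightarrow> nat) \<Rightarrow> 'f set \<Rightarrow> 'f set \<Rightarrow> ('f,'v,'c) equation \<Rightarrow> ('f,'v,'c) equation \<Rightarrow> bool" where
  "proc ar G1 G0 e e' \<longleftrightarrow>
     (\<exists>\<rho>1 \<rho>2 Xs e2.
        (\<forall>x c. \<rho>1 x = Some c \<longrightarrow> c \<in> G0) \<and>
        distinct Xs \<and> set Xs = cvars_eq e \<and>
        cvar_steps ar G1 G0 (vars_eq e) Xs (map_eq (repl_vars \<rho>1) e) e2 \<and>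
        (\<forall>x c. \<rho>2 x = Some c \<longrightarrow> c \<in> G0) \<and> (\<forall>x\<in>vars_eq e. \<rho>2 x = None) \<and>
        e' = map_eq (repl_vars \<rho>2) e2)"

end

theory Submission
  imports Defs
begin

lemma subterms_refl: "t \<in> subterms t" by (cases t) auto

lemma subterms_trans: "s \<in> subterms t \<Longrightarrow> u \<in> subterms s \<Longrightarrow> u \<in> subterms t"
  by (induction t) auto

lemma vars_subterms: "x \<in> vars t \<longleftrightarrow> Var x \<in> subterms t" by (induction t) auto
lemma cvars_subterms: "X \<in> cvars t \<longleftrightarrow> (\<exists>s. CApp X s \<in> subterms t)" by (induction t) auto
lemma finite_vars: "finite (vars t)" by (induction t) auto
lemma finite_cvars: "finite (cvars t)" by (induction t) auto

lemma gsubst_cong: "(\<And>x. x \<in> vars t \<Longrightarrow> sv x = sv' x) \<Longrightarrow> (\<And>X. X \<in> cvars t \<Longrightarrow> sc X = sc' X)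
  \<Longrightarrow> gsubst sc sv t = gsubst sc' sv' t" by (induction t) (fastforce intro!: map_cong)+

fun ccomp :: "'f gctxt \<Rightarrow> 'f gctxt \<Rightarrow> 'f gctxt" where
  "ccomp Hole D = D" | "ccomp (GCtx f l C r) D = GCtx f l (ccomp C D) r"

lemma cfill_ccomp: "cfill (ccomp C D) t = cfill C (cfill D t)" by (induction C) auto
lemma wf_ccomp: "wf_gctxt ar C \<Longrightarrow> wf_gctxt ar D \<Longrightarrow> wf_gctxt ar (ccomp C D)" by (induction C) auto
lemma wf_ccomp_D: "wf_gctxt ar (ccomp C D) \<Longrightarrow> wf_gctxt ar C \<and> wf_gctxt ar D" by (induction C) auto
lemma ccomp_decomp: "C \<noteq> Hole \<Longrightarrow> \<exists>C' f l r. C = ccomp C' (GCtx f l Hole r)"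
proof (induction C)
  case Hole then show ?case by simp
next
  case (GCtx f l C r)
  show ?case
  proof (cases "C = Hole")
    case True then show ?thesis by (intro exI[of _ Hole]) auto
  next
    case False
    then obtain C' g l' r' where "C = ccomp C' (GCtx g l' Hole r')" using GCtx by blast
    then show ?thesis by (intro exI[of _ "GCtx f l C' r"]) auto
  qed
qed

fun lastl :: "'f gctxt \<Rightarrow> 'f" where
  "lastl Hole = undefined" | "lastl (GCtx f l C r) = (if C = Hole then f else lastl C)"

lemma ccomp_nonhole: "ccomp C (GCtx f l Hole r) \<noteq> Hole" by (cases C) auto
lemma lastl_ccomp: "lastl (ccomp C (GCtx f l Hole r)) = f"
  by (induction C) (auto simp: ccomp_nonhole)

fun groot :: "'f gterm \<Rightarrow> 'f" where "groot (GFun f ts) = f"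

lemma gsubst_repl: "gsubst sc sv (repl_vars \<rho> t) = gsubst sc (\<lambda>x. case \<rho> x of None \<Rightarrow> sv x | Some c \<Rightarrow> GFun c []) t"
  by (induction t) (auto split: option.split)
lemma gsubst_pop: "gsubst sc sv (pop_ctx X f xs1 xs2 t) =
   gsubst (sc(X := ccomp (sc X) (GCtx f (map sv xs1) Hole (map sv xs2)))) sv t"
  by (induction t) (auto simp: cfill_ccomp o_def)
lemma gsubst_remove: "gsubst sc sv (remove_ctx X t) = gsubst (sc(X:=Hole)) sv t"
  by (induction t) auto

lemma pop_capp: "CApp Y s' \<in> subterms (pop_ctx X f xs1 xs2 t) \<Longrightarrow> \<exists>s. CApp Y s \<in> subterms t \<and>
   s' = (if Y = X then Fun f (map Var xs1 @ [pop_ctx X f xs1 xs2 s] @ map Var xs2) else pop_ctx X f xs1 xs2 s)"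
  by (induction t) (force split: if_splits)+
lemma vars_pop: "vars (pop_ctx X f xs1 xs2 t) \<subseteq> vars t \<union> set xs1 \<union> set xs2"
  by (induction t) auto
lemma pop_Fun: "pop_ctx X f xs1 xs2 s = Fun a ts \<Longrightarrow> \<exists>ts0. s = Fun a ts0 \<and> ts = map (pop_ctx X f xs1 xs2) ts0"
  by (cases s) (auto split: if_splits)
lemma pop_Var: "pop_ctx X f xs1 xs2 s = Var x \<Longrightarrow> s = Var x"
  by (cases s) (auto split: if_splits)
lemma cvars_pop: "cvars (pop_ctx X f xs1 xs2 t) = cvars t" by (induction t) auto
lemma wf_pop: "length xs1 + 1 + length xs2 = ar f \<Longrightarrow> wf_trm ar t \<Longrightarrow> wf_trm ar (pop_ctx X f xs1 xs2 t)"
  by (induction t) auto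

lemma rem_capp: "CApp Y s' \<in> subterms (remove_ctx X t) \<Longrightarrow> Y \<noteq> X \<and> (\<exists>s. CApp Y s \<in> subterms t \<and> s' = remove_ctx X s)"
  by (induction t) (force split: if_splits)+
lemma vars_rem: "vars (remove_ctx X t) = vars t" by (induction t) auto
lemma rem_Var: "remove_ctx X s = Var x \<Longrightarrow> s = Var x \<or> (\<exists>s0. s = CApp X s0 \<and> remove_ctx X s0 = Var x)"
  by (cases s) (auto split: if_splits)
lemma rem_Fun: "remove_ctx X s = Fun a ts \<Longrightarrow> (\<exists>ts0. s = Fun a ts0 \<and> ts = map (remove_ctx X) ts0)
   \<or> (\<exists>s0. s = CApp X s0 \<and> remove_ctx X s0 = Fun a ts)"
  by (cases s) (auto split: if_splits)
lemma cvars_rem: "cvars (remove_ctx X t) = cvars t - {X}" by (induction t) auto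
lemma wf_rem: "wf_trm ar t \<Longrightarrow> wf_trm ar (remove_ctx X t)" by (induction t) auto

lemma repl_capp: "CApp Y s' \<in> subterms (repl_vars \<rho> t) \<Longrightarrow> \<exists>s. CApp Y s \<in> subterms t \<and> s' = repl_vars \<rho> s"
  by (induction t) (force split: option.splits)+
lemma repl_var: "Var x \<in> subterms (repl_vars \<rho> t) \<Longrightarrow> Var x \<in> subterms t \<and> \<rho> x = None"
  by (induction t) (auto split: option.splits)
lemma repl_Fun0: "repl_vars \<rho> s = Fun a [] \<Longrightarrow> s = Fun a [] \<or> (\<exists>x. s = Var x \<and> \<rho> x = Some a)"
  by (cases s) (auto split: option.splits)
lemma cvars_repl: "cvars (repl_vars \<rho> t) = cvars t" by (induction t) (auto split: option.splits)
lemma vars_repl: "vars (repl_vars \<rho> t) \<subseteq> vars t" by (induction t) (auto split: option.splits)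
lemma wf_repl: "(\<forall>x c. \<rho> x = Some c \<longrightarrow> ar c = 0) \<Longrightarrow> wf_trm ar t \<Longrightarrow> wf_trm ar (repl_vars \<rho> t)"
  by (induction t) (auto split: option.splits)


lemma sol_remove_back: "is_solution ar sc sv (map_eq (remove_ctx X) e) \<Longrightarrow> is_solution ar (sc(X:=Hole)) sv e"
  by (auto simp: is_solution_def map_eq_def gsubst_remove wf_subst_def)

lemma sol_pop_back:
  assumes "is_solution ar sc sv (map_eq (pop_ctx X f xs1 xs2) e)" "length xs1 + 1 + length xs2 = ar f"
  shows "\<exists>sc. is_solution ar sc sv e"
proof -
  have w: "wf_subst ar sc sv" using assms(1) by (simp add: is_solution_def)
  let ?C = "ccomp (sc X) (GCtx f (map sv xs1) Hole (map sv xs2))"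
  have "wf_gctxt ar ?C" using w assms(2) by (auto simp: wf_subst_def intro!: wf_ccomp)
  then have "wf_subst ar (sc(X := ?C)) sv" using w by (auto simp: wf_subst_def)
  then show ?thesis using assms(1)
    by (intro exI[of _ "sc(X := ?C)"]) (auto simp: is_solution_def map_eq_def gsubst_pop)
qed

lemma cvar_step_back: "cvar_step ar G1 G0 V X e e' \<Longrightarrow> is_solution ar sc sv e' \<Longrightarrow> \<exists>sc sv. is_solution ar sc sv e"
  unfolding cvar_step_def pop_step_def
  by (metis sol_remove_back sol_pop_back)

lemma cvar_steps_back: "cvar_steps ar G1 G0 V Xs e e' \<Longrightarrow> is_solution ar sc sv e' \<Longrightarrow> \<exists>sc sv. is_solution ar sc sv e"
proof (induction Xs arbitrary: e sc sv)
  case Nil then show ?case by auto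
next
  case (Cons X Xs)
  then obtain e1 where "cvar_step ar G1 G0 V X e e1" "cvar_steps ar G1 G0 V Xs e1 e'" by auto
  with Cons show ?case by (metis cvar_step_back)
qed

lemma repl_back:
  assumes "is_solution ar sc sv (map_eq (repl_vars \<rho>) e)" "\<forall>x c. \<rho> x = Some c \<longrightarrow> ar c = 0"
  shows "\<exists>sc sv. is_solution ar sc sv e"
proof -
  let ?sv = "\<lambda>x. case \<rho> x of None \<Rightarrow> sv x | Some c \<Rightarrow> GFun c []"
  have "wf_subst ar sc ?sv" using assms by (auto simp: is_solution_def wf_subst_def split: option.split)
  then show ?thesis using assms(1)
    by (intro exI[of _ sc] exI[of _ ?sv]) (auto simp: is_solution_def map_eq_def gsubst_repl)
qed

lemma partA:
  assumes "\<forall>a\<in>G0. ar a = 0" "proc ar G1 G0 e e'" "is_solution ar sc' sv' e'"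
  shows "\<exists>sc sv. is_solution ar sc sv e"
proof -
  obtain \<rho>1 \<rho>2 Xs e2 where h: "\<forall>x c. \<rho>1 x = Some c \<longrightarrow> c \<in> G0"
        "cvar_steps ar G1 G0 (vars_eq e) Xs (map_eq (repl_vars \<rho>1) e) e2"
        "\<forall>x c. \<rho>2 x = Some c \<longrightarrow> c \<in> G0" "e' = map_eq (repl_vars \<rho>2) e2"
    using assms(2) unfolding proc_def by blast
  obtain sc2 sv2 where "is_solution ar sc2 sv2 e2" using repl_back[of ar sc' sv' \<rho>2 e2] h assms by auto
  then obtain sc1 sv1 where "is_solution ar sc1 sv1 (map_eq (repl_vars \<rho>1) e)"
    using cvar_steps_back h(2) by blast
  then show ?thesis using repl_back[of ar sc1 sv1 \<rho>1 e] h assms by auto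
qed

lemma asub_lab: "N \<in> asubtrees (lab o' g) \<Longrightarrow> \<exists>f cs. N = ANode f o' cs \<and> (\<forall>c\<in>set cs. \<exists>h ds. c = ANode h o' ds)"
proof (induction g arbitrary: N)
  case (GFun f ts)
  have r: "\<exists>h ds. lab o' t = ANode h o' ds" for t by (cases t) auto
  from GFun show ?case using r by auto
qed

lemma asub_fill: "N \<in> asubtrees (fill_lab o' C T) \<Longrightarrow> N \<in> asubtrees T \<or>
   (\<exists>f cs. N = ANode f o' cs \<and> (\<forall>c\<in>set cs. (\<exists>h ds. c = ANode h o' ds) \<or> (c = T \<and> C \<noteq> Hole \<and> f = lastl C)))"
proof (induction C arbitrary: N)
  case Hole then show ?case by simp
next
  case (GCtx f l C r)
  have r: "\<exists>h ds. lab o' t = ANode h o' ds" for t by (cases t) auto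
  have r2: "C \<noteq> Hole \<Longrightarrow> \<exists>h ds. fill_lab o' C T = ANode h o' ds" by (cases C) auto
  from GCtx.prems consider
     "N = fill_lab o' (GCtx f l C r) T"
   | t where "t \<in> set l \<or> t \<in> set r" "N \<in> asubtrees (lab o' t)"
   | "N \<in> asubtrees (fill_lab o' C T)" by auto
  then show ?case
  proof cases
    case 1 then show ?thesis using r r2 by (cases "C = Hole") auto
  next
    case 2 then show ?thesis using asub_lab by metis
  next
    case 3
    from GCtx.IH[OF 3] show ?thesis
    proof
      assume "N \<in> asubtrees T" then show ?thesis by simp
    next
      assume "\<exists>fa cs. N = ANode fa o' cs \<and> (\<forall>c\<in>set cs. (\<exists>h ds. c = ANode h o' ds) \<or> c = T \<and> C \<noteq> Hole \<and> fa = lastl C)"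
      then obtain fa cs where "N = ANode fa o' cs" "\<forall>c\<in>set cs. (\<exists>h ds. c = ANode h o' ds) \<or> c = T \<and> C \<noteq> Hole \<and> fa = lastl C" by blast
      then show ?thesis by (intro disjI2 exI[of _ fa] exI[of _ cs]) auto
    qed
  qed
qed

lemma aevals_set: "c \<in> set (aevals sc sv s p i ts) \<Longrightarrow> \<exists>k<length ts. c = aeval sc sv s (p @ [i+k]) (ts ! k)"
proof (induction ts arbitrary: i)
  case Nil then show ?case by simp
next
  case (Cons t ts)
  then consider "c = aeval sc sv s (p @ [i]) t" | "c \<in> set (aevals sc sv s p (Suc i) ts)" by auto
  then show ?case
  proof cases
    case 1 then show ?thesis by (intro exI[of _ 0]) auto
  next
    case 2
    then obtain k where "k < length ts" "c = aeval sc sv s (p @ [Suc i + k]) (ts ! k)" using Cons.IH by blast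
    then show ?thesis by (intro exI[of _ "Suc k"]) auto
  qed
qed

definition good where "good ar G1 G0 sc sv t \<longleftrightarrow> wf_trm ar t \<and> (\<forall>x. Var x \<in> subterms t \<longrightarrow> groot (sv x) \<notin> G0) \<and>
   (\<forall>Y s. CApp Y s \<in> subterms t \<longrightarrow> sc Y \<noteq> Hole \<and> (lastl (sc Y) \<in> G1 \<longrightarrow> (\<forall>a\<in>G0. s \<noteq> Fun a [])))"

lemma good_sub: "good ar G1 G0 sc sv t \<Longrightarrow> t' \<in> subterms t \<Longrightarrow> wf_trm ar t' \<Longrightarrow> good ar G1 G0 sc sv t'"
  unfolding good_def using subterms_trans by blast

lemma aeval_root:
  assumes "aeval sc sv s p t = ANode a o2 ds" "good ar G1 G0 sc sv t" "wf_subst ar sc sv" "a \<in> G0"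
    "\<forall>a\<in>G0. ar a = 0"
  shows "\<exists>ts. t = Fun a ts \<and> o2 = Expl"
proof (cases t)
  case (Fun g ts) then show ?thesis using assms by auto
next
  case (Var x)
  then show ?thesis using assms by (cases "sv x") (auto simp: good_def)
next
  case (CApp Y t0)
  then have "sc Y \<noteq> Hole" using assms(2) by (auto simp: good_def)
  then obtain h l C r where "sc Y = GCtx h l C r" by (cases "sc Y") auto
  moreover have "wf_gctxt ar (sc Y)" using assms(3) by (auto simp: wf_subst_def)
  ultimately show ?thesis using assms CApp by auto
qed

lemma nocross:
  assumes "good ar G1 G0 sc sv t" "wf_subst ar sc sv" "\<forall>f\<in>G1. 1 \<le> ar f" "\<forall>a\<in>G0. ar a = 0"
  shows "N \<in> asubtrees (aeval sc sv s p t) \<Longrightarrow> N = ANode f o1 cs \<Longrightarrow> f \<in> G1 \<Longrightarrow>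
     ANode a o2 ds \<in> set cs \<Longrightarrow> a \<in> G0 \<Longrightarrow> o1 = o2"
  using assms(1)
proof (induction t arbitrary: p N)
  case (Fun g ts)
  have w: "\<forall>t\<in>set ts. wf_trm ar t" using Fun.prems(6) by (simp add: good_def)
  have gk: "good ar G1 G0 sc sv t" if "t \<in> set ts" for t
    using good_sub[OF Fun.prems(6), of t] that w subterms_refl by fastforce
  from Fun.prems(1) consider "N = ANode g Expl (aevals sc sv s p 0 ts)"
    | c where "c \<in> set (aevals sc sv s p 0 ts)" "N \<in> asubtrees c" by auto
  then show ?case
  proof cases
    case 1
    then have "ANode a o2 ds \<in> set (aevals sc sv s p 0 ts)" "o1 = Expl" using Fun.prems by auto
    then obtain k where "k < length ts" "ANode a o2 ds = aeval sc sv s (p @ [0+k]) (ts ! k)"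
      using aevals_set by metis
    then show ?thesis using aeval_root[of sc sv s _ "ts!k" a o2 ds ar G1 G0] gk assms \<open>o1 = Expl\<close> Fun.prems
      by (metis nth_mem)
  next
    case 2
    then obtain k where "k < length ts" "c = aeval sc sv s (p @ [0+k]) (ts ! k)"
      using aevals_set by metis
    then show ?thesis using Fun.IH[of "ts!k"] gk 2 Fun.prems by auto
  qed
next
  case (Var x)
  then show ?case using asub_lab by fastforce
next
  case (CApp Y t0)
  have g0: "good ar G1 G0 sc sv t0" using good_sub[OF CApp.prems(6)] CApp.prems(6)
    by (auto simp: good_def)
  let ?T = "aeval sc sv s (p @ [0]) t0"
  from CApp.prems(1) have "N \<in> asubtrees (fill_lab (Occ s p) (sc Y) ?T)" by simp
  from asub_fill[OF this] show ?case
  proof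
    assume "N \<in> asubtrees ?T" then show ?thesis using CApp.IH g0 CApp.prems by blast
  next
    assume "\<exists>f cs. N = ANode f (Occ s p) cs \<and> (\<forall>c\<in>set cs. (\<exists>h ds. c = ANode h (Occ s p) ds) \<or> (c = ?T \<and> sc Y \<noteq> Hole \<and> f = lastl (sc Y)))"
    then obtain f' cs' where N: "N = ANode f' (Occ s p) cs'"
      "\<forall>c\<in>set cs'. (\<exists>h ds. c = ANode h (Occ s p) ds) \<or> (c = ?T \<and> sc Y \<noteq> Hole \<and> f' = lastl (sc Y))" by blast
    then have e: "f' = f" "cs' = cs" "o1 = Occ s p" using CApp.prems by auto
    show ?thesis
    proof (cases "\<exists>h ds'. ANode a o2 ds = ANode h (Occ s p) ds'")
      case True then show ?thesis using e by auto
    next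
      case False
      then have "ANode a o2 ds = ?T" "lastl (sc Y) \<in> G1" using N e CApp.prems by auto
      then obtain ts where "t0 = Fun a ts" using aeval_root[of sc sv s _ t0 a o2 ds ar G1 G0] g0 assms CApp.prems
        by metis
      moreover have "wf_trm ar t0" using g0 by (simp add: good_def)
      ultimately have "t0 = Fun a []" using assms(4) CApp.prems(5) by auto
      then show ?thesis using CApp.prems(6) \<open>lastl (sc Y) \<in> G1\<close> CApp.prems(5) by (auto simp: good_def)
    qed
  qed
qed

lemma no_crossing_occ:
  assumes "good ar G1 G0 sc sv t" "wf_subst ar sc sv" "\<forall>f\<in>G1. 1 \<le> ar f" "\<forall>a\<in>G0. ar a = 0"
    "f \<in> G1" "a \<in> G0"
  shows "\<not> crossing_occ ar (aeval sc sv s p t) f a"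
  unfolding crossing_occ_def using nocross[OF assms(1-4)] assms(5,6) by blast


definition inv0 where "inv0 ar G1 G0 V C0 T sc sv D e \<longleftrightarrow>
  wf_subst ar sc sv \<and> gsubst sc sv (fst e) = T \<and> gsubst sc sv (snd e) = T \<and>
  wf_trm ar (fst e) \<and> wf_trm ar (snd e) \<and>
  (\<forall>Y x. CApp Y (Var x) \<in> subterms_eq e \<longrightarrow> x \<in> V) \<and>
  (\<forall>x\<in>V. Var x \<in> subterms_eq e \<longrightarrow> groot (sv x) \<notin> G0) \<and>
  (\<forall>Y\<in>D. \<forall>a\<in>G0. lastl (sc Y) \<in> G1 \<longrightarrow> CApp Y (Fun a []) \<notin> subterms_eq e) \<and>
  cvars_eq e \<subseteq> C0"

definition ne where "ne sc e \<longleftrightarrow> (\<forall>Y\<in>cvars_eq e. sc Y \<noteq> Hole)"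

lemma sub_capp: "CApp Y s \<in> subterms t \<Longrightarrow> s \<in> subterms t"
  using subterms_trans[of "CApp Y s" t s] subterms_refl[of s] by auto

lemma rem_capp_var: "CApp Y (Var x) \<in> subterms (remove_ctx X t) \<Longrightarrow>
   \<forall>s. CApp X s \<in> subterms t \<longrightarrow> (\<exists>g ts. s = Fun g ts) \<Longrightarrow> CApp Y (Var x) \<in> subterms t"
proof -
  assume a: "CApp Y (Var x) \<in> subterms (remove_ctx X t)" and h: "\<forall>s. CApp X s \<in> subterms t \<longrightarrow> (\<exists>g ts. s = Fun g ts)"
  obtain s where s: "CApp Y s \<in> subterms t" "Var x = remove_ctx X s" using rem_capp[OF a] by blast
  from rem_Var[OF s(2)[symmetric]] show ?thesis
  proof
    assume "s = Var x" then show ?thesis using s by simp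
  next
    assume "\<exists>s0. s = CApp X s0 \<and> remove_ctx X s0 = Var x"
    then obtain s0 where "s = CApp X s0" "remove_ctx X s0 = Var x" by blast
    moreover then have "CApp X s0 \<in> subterms t" using sub_capp[OF s(1)] by simp
    ultimately show ?thesis using h by auto
  qed
qed

lemma rem_capp_fun: "CApp Y (Fun a []) \<in> subterms (remove_ctx X t) \<Longrightarrow>
   \<forall>s. CApp X s \<in> subterms t \<longrightarrow> (\<exists>g ts. s = Fun g ts \<and> g \<noteq> a) \<Longrightarrow> CApp Y (Fun a []) \<in> subterms t"
proof -
  assume a: "CApp Y (Fun a []) \<in> subterms (remove_ctx X t)" and h: "\<forall>s. CApp X s \<in> subterms t \<longrightarrow> (\<exists>g ts. s = Fun g ts \<and> g \<noteq> a)"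
  obtain s where s: "CApp Y s \<in> subterms t" "Fun a [] = remove_ctx X s" using rem_capp[OF a] by blast
  from rem_Fun[OF s(2)[symmetric]] show ?thesis
  proof
    assume "\<exists>ts0. s = Fun a ts0 \<and> [] = map (remove_ctx X) ts0" then show ?thesis using s by auto
  next
    assume "\<exists>s0. s = CApp X s0 \<and> remove_ctx X s0 = Fun a []"
    then obtain s0 where "s = CApp X s0" "remove_ctx X s0 = Fun a []" by blast
    moreover then have "CApp X s0 \<in> subterms t" using sub_capp[OF s(1)] by simp
    ultimately show ?thesis using h by auto
  qed
qed

lemma pop_capp_var: "CApp Y (Var x) \<in> subterms (pop_ctx X f xs1 xs2 t) \<Longrightarrow> CApp Y (Var x) \<in> subterms t"
proof -
  assume a: "CApp Y (Var x) \<in> subterms (pop_ctx X f xs1 xs2 t)"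
  from pop_capp[OF a] obtain s where s: "CApp Y s \<in> subterms t"
     "Var x = (if Y = X then Fun f (map Var xs1 @ [pop_ctx X f xs1 xs2 s] @ map Var xs2) else pop_ctx X f xs1 xs2 s)"
    by blast
  then have "Y \<noteq> X" by (auto split: if_splits)
  then have "pop_ctx X f xs1 xs2 s = Var x" using s by simp
  then have "s = Var x" by (rule pop_Var)
  then show ?thesis using s by simp
qed

lemma pop_capp_fun: "CApp Y (Fun a []) \<in> subterms (pop_ctx X f xs1 xs2 t) \<Longrightarrow> a \<noteq> f \<Longrightarrow>
   CApp Y (Fun a []) \<in> subterms t \<and> Y \<noteq> X"
proof -
  assume a: "CApp Y (Fun a []) \<in> subterms (pop_ctx X f xs1 xs2 t)" "a \<noteq> f"
  from pop_capp[OF a(1)] obtain s where s: "CApp Y s \<in> subterms t"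
     "Fun a [] = (if Y = X then Fun f (map Var xs1 @ [pop_ctx X f xs1 xs2 s] @ map Var xs2) else pop_ctx X f xs1 xs2 s)"
    by blast
  then have "Y \<noteq> X" using a(2) by (auto split: if_splits)
  then have "pop_ctx X f xs1 xs2 s = Fun a []" using s by simp
  then obtain ts0 where "s = Fun a ts0" "[] = map (pop_ctx X f xs1 xs2) ts0" using pop_Fun by metis
  then have "s = Fun a []" by simp
  then show ?thesis using s \<open>Y \<noteq> X\<close> by simp
qed

lemma pop_capp_X: "CApp X s \<in> subterms (pop_ctx X f xs1 xs2 t) \<Longrightarrow> \<exists>ts. s = Fun f ts"
  using pop_capp[of X s X f xs1 xs2 t] by auto

lemma pop_var: "Var x \<in> subterms (pop_ctx X f xs1 xs2 t) \<Longrightarrow> x \<notin> set xs1 \<Longrightarrow> x \<notin> set xs2 \<Longrightarrow> Var x \<in> subterms t"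
proof -
  assume "Var x \<in> subterms (pop_ctx X f xs1 xs2 t)" "x \<notin> set xs1" "x \<notin> set xs2"
  then have "x \<in> vars (pop_ctx X f xs1 xs2 t)" by (simp add: vars_subterms)
  then have "x \<in> vars t" using vars_pop[of X f xs1 xs2 t] \<open>x \<notin> set xs1\<close> \<open>x \<notin> set xs2\<close> by blast
  then show ?thesis by (simp add: vars_subterms)
qed

lemma fresh_list: "infinite (UNIV::'v set) \<Longrightarrow> finite (F::'v set) \<Longrightarrow> \<exists>zs. length zs = n \<and> distinct zs \<and> set zs \<inter> F = {}"
proof (induction n)
  case 0 then show ?case by auto
next
  case (Suc n)
  then obtain zs where zs: "length zs = n" "distinct zs" "set zs \<inter> F = {}" by blast
  obtain z where "z \<notin> F \<union> set zs" using ex_new_if_finite[OF Suc.prems(1), of "F \<union> set zs"] Suc.prems by auto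
  then show ?case using zs by (intro exI[of _ "z # zs"]) auto
qed

lemma map_fun_exists: "distinct zs \<Longrightarrow> length zs = length vs \<Longrightarrow> \<exists>g. map g zs = vs \<and> (\<forall>x. x \<notin> set zs \<longrightarrow> g x = h x)"
proof (induction zs arbitrary: vs)
  case Nil then show ?case by auto
next
  case (Cons z zs)
  then obtain w ws where vs: "vs = w # ws" by (cases vs) auto
  with Cons obtain g where g: "map g zs = ws" "\<forall>x. x \<notin> set zs \<longrightarrow> g x = h x" by auto
  have "map (g(z := w)) zs = map g zs" using Cons.prems by (auto intro!: map_cong)
  then show ?case using g vs Cons.prems by (intro exI[of _ "g(z := w)"]) auto
qed

lemma rem_inv0:
  assumes I: "inv0 ar G1 G0 V C0 T sc sv D e" and h: "sc X = Hole"
    and ch: "\<forall>s. CApp X s \<in> subterms_eq e \<longrightarrow> (\<exists>g ts. s = Fun g ts \<and> g \<notin> G0)"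
  shows "inv0 ar G1 G0 V C0 T sc sv D (map_eq (remove_ctx X) e)"
proof -
  have sc: "sc(X := Hole) = sc" using h by auto
  have ch1: "\<forall>s. CApp X s \<in> subterms t \<longrightarrow> (\<exists>g ts. s = Fun g ts)" if "t = fst e \<or> t = snd e" for t
    using ch that by (auto simp: subterms_eq_def)
  have ch2: "\<forall>s. CApp X s \<in> subterms t \<longrightarrow> (\<exists>g ts. s = Fun g ts \<and> g \<noteq> a)" if "t = fst e \<or> t = snd e" "a \<in> G0" for t a
    using ch that by (fastforce simp: subterms_eq_def)
  have v: "Var x \<in> subterms (remove_ctx X t) \<Longrightarrow> Var x \<in> subterms t" for x t
    using vars_rem vars_subterms by metis
  have se1: "t \<in> subterms_eq (map_eq (remove_ctx X) e) \<longleftrightarrow> t \<in> subterms (remove_ctx X (fst e)) \<or> t \<in> subterms (remove_ctx X (snd e))" for t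
    by (simp add: subterms_eq_def map_eq_def)
  have se: "t \<in> subterms_eq e \<longleftrightarrow> t \<in> subterms (fst e) \<or> t \<in> subterms (snd e)" for t
    by (simp add: subterms_eq_def)
  have Ic: "\<forall>Y x. CApp Y (Var x) \<in> subterms_eq e \<longrightarrow> x \<in> V" using I by (simp add: inv0_def)
  have Iv: "\<forall>x\<in>V. Var x \<in> subterms_eq e \<longrightarrow> groot (sv x) \<notin> G0" using I by (simp add: inv0_def)
  have Id: "\<forall>Y\<in>D. \<forall>a\<in>G0. lastl (sc Y) \<in> G1 \<longrightarrow> CApp Y (Fun a []) \<notin> subterms_eq e" using I by (simp add: inv0_def)
  show ?thesis unfolding inv0_def
  proof (intro conjI)
    show "wf_subst ar sc sv" using I by (simp add: inv0_def)
    show "gsubst sc sv (fst (map_eq (remove_ctx X) e)) = T" "gsubst sc sv (snd (map_eq (remove_ctx X) e)) = T"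
      using I by (simp_all add: inv0_def map_eq_def gsubst_remove sc)
    show "wf_trm ar (fst (map_eq (remove_ctx X) e))" "wf_trm ar (snd (map_eq (remove_ctx X) e))"
      using I by (simp_all add: inv0_def map_eq_def wf_rem)
    show "\<forall>Y x. CApp Y (Var x) \<in> subterms_eq (map_eq (remove_ctx X) e) \<longrightarrow> x \<in> V"
    proof (intro allI impI)
      fix Y x assume h: "CApp Y (Var x) \<in> subterms_eq (map_eq (remove_ctx X) e)"
      have "CApp Y (Var x) \<in> subterms_eq e" using h rem_capp_var[OF _ ch1[of "fst e"]] rem_capp_var[OF _ ch1[of "snd e"]]
        unfolding se1 se by blast
      then show "x \<in> V" using Ic by blast
    qed
    show "\<forall>x\<in>V. Var x \<in> subterms_eq (map_eq (remove_ctx X) e) \<longrightarrow> groot (sv x) \<notin> G0"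
    proof (intro ballI impI)
      fix x assume h: "x \<in> V" "Var x \<in> subterms_eq (map_eq (remove_ctx X) e)"
      then have "Var x \<in> subterms_eq e" using v[of x "fst e"] v[of x "snd e"] unfolding se1 se by blast
      then show "groot (sv x) \<notin> G0" using Iv h(1) by blast
    qed
    show "\<forall>Y\<in>D. \<forall>a\<in>G0. lastl (sc Y) \<in> G1 \<longrightarrow> CApp Y (Fun a []) \<notin> subterms_eq (map_eq (remove_ctx X) e)"
    proof (intro ballI impI notI)
      fix Y a assume h: "Y \<in> D" "a \<in> G0" "lastl (sc Y) \<in> G1" "CApp Y (Fun a []) \<in> subterms_eq (map_eq (remove_ctx X) e)"
      have "CApp Y (Fun a []) \<in> subterms_eq e"
        using h(4) rem_capp_fun[OF _ ch2[of "fst e" a]] rem_capp_fun[OF _ ch2[of "snd e" a]] h(2)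
        unfolding se1 se by blast
      then show False using Id h by blast
    qed
    show "cvars_eq (map_eq (remove_ctx X) e) \<subseteq> C0" using I
      by (auto simp: inv0_def map_eq_def cvars_eq_def cvars_rem)
  qed
qed

lemma step:
  fixes e :: "('f,'v,'c) equation"
  assumes I: "inv0 ar G1 G0 V C0 T sc sv D e" "ne sc e" and inf: "infinite (UNIV::'v set)" "finite V"
    and ar: "\<forall>f\<in>G1. 1 \<le> ar f" "\<forall>a\<in>G0. ar a = 0"
  shows "\<exists>e' sc' sv'. cvar_step ar G1 G0 V X e e' \<and> inv0 ar G1 G0 V C0 T sc' sv' (insert X D) e' \<and> ne sc' e'"
proof (cases "sc X \<noteq> Hole \<and> lastl (sc X) \<in> G1 \<and> (\<exists>a\<in>G0. CApp X (Fun a []) \<in> subterms_eq e)")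
  case False
  have cs: "cvar_step ar G1 G0 V X e e" unfolding cvar_step_def pop_step_def by (intro exI[of _ e]) simp
  have "CApp X (Fun a []) \<in> subterms_eq e \<Longrightarrow> sc X \<noteq> Hole" for a
    using I(2) cvars_subterms by (fastforce simp: ne_def cvars_eq_def subterms_eq_def)
  moreover have "\<forall>Y\<in>D. \<forall>a\<in>G0. lastl (sc Y) \<in> G1 \<longrightarrow> CApp Y (Fun a []) \<notin> subterms_eq e" using I(1) by (simp add: inv0_def)
  ultimately have "\<forall>Y\<in>insert X D. \<forall>a\<in>G0. lastl (sc Y) \<in> G1 \<longrightarrow> CApp Y (Fun a []) \<notin> subterms_eq e"
    using False by blast
  then have "inv0 ar G1 G0 V C0 T sc sv (insert X D) e" using I(1) unfolding inv0_def by blast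
  then show ?thesis using cs I(2) by blast
next
  case True
  then obtain a where a: "a \<in> G0" "CApp X (Fun a []) \<in> subterms_eq e" by blast
  obtain C' f l r where dec: "sc X = ccomp C' (GCtx f l Hole r)" using ccomp_decomp True by blast
  have fG: "f \<in> G1" using True by (simp add: dec lastl_ccomp)
  have wsub: "wf_subst ar sc sv" using I(1) by (simp add: inv0_def)
  then have "wf_gctxt ar (sc X)" by (simp add: wf_subst_def)
  then have "wf_gctxt ar C' \<and> wf_gctxt ar (GCtx f l Hole r)" using wf_ccomp_D dec by metis
  then have wC: "wf_gctxt ar C'" and wL: "length l + 1 + length r = ar f" "\<forall>t\<in>set l. wf_gterm ar t" "\<forall>t\<in>set r. wf_gterm ar t"
    by auto
  have fin: "finite (V \<union> vars_eq e)" by (simp add: vars_eq_def finite_vars inf(2))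
  obtain zs where zs: "length zs = length l + length r" "distinct zs" "set zs \<inter> (V \<union> vars_eq e) = {}"
    using fresh_list[OF inf(1) fin] by blast
  define xs1 where "xs1 = take (length l) zs"
  define xs2 where "xs2 = drop (length l) zs"
  have zs12: "xs1 @ xs2 = zs" by (simp add: xs1_def xs2_def)
  obtain sv' where sv': "map sv' zs = l @ r" "\<forall>x. x \<notin> set zs \<longrightarrow> sv' x = sv x"
    using map_fun_exists[OF zs(2), of "l @ r" sv] zs(1) by auto
  have m1: "map sv' xs1 = l" unfolding xs1_def using sv'(1) by (metis append_eq_conv_conj take_map)
  have m2: "map sv' xs2 = r" unfolding xs2_def using sv'(1) by (metis append_eq_conv_conj drop_map)
  have len: "length xs1 + 1 + length xs2 = ar f" using wL(1) zs(1) by (simp add: xs1_def xs2_def)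
  define sc' where "sc' = sc(X := C')"
  define e1 where "e1 = map_eq (pop_ctx X f xs1 xs2) e"
  have ps: "pop_step ar G1 G0 V X e e1"
    unfolding pop_step_def e1_def
    apply (rule disjI2)
    apply (rule exI[of _ f], rule exI[of _ xs1], rule exI[of _ xs2], rule exI[of _ a])
    using fG a len zs zs12 by simp
  have scc: "sc'(X := ccomp (sc' X) (GCtx f (map sv' xs1) Hole (map sv' xs2))) = sc"
    using dec m1 m2 by (auto simp: sc'_def)
  have gs: "gsubst sc' sv' (pop_ctx X f xs1 xs2 t) = gsubst sc sv t" if "vars t \<subseteq> vars_eq e" for t
  proof -
    have "gsubst sc' sv' (pop_ctx X f xs1 xs2 t) = gsubst sc sv' t" using gsubst_pop scc by metis
    also have "\<dots> = gsubst sc sv t" using that zs(3) sv'(2) by (intro gsubst_cong) auto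
    finally show ?thesis .
  qed
  have wsv': "wf_gterm ar (sv' x)" for x
  proof (cases "x \<in> set zs")
    case True
    then have "sv' x \<in> set (l @ r)" using sv'(1) by (metis image_eqI list.set_map)
    then show ?thesis using wL by auto
  next
    case False then show ?thesis using sv'(2) wsub by (simp add: wf_subst_def)
  qed
  have wsub': "wf_subst ar sc' sv'" using wsub wC wsv' by (auto simp: wf_subst_def sc'_def)
  have fa: "a' \<noteq> f" if "a' \<in> G0" for a' using that fG ar by fastforce
  have subs1: "t \<in> subterms_eq e1 \<longleftrightarrow> t \<in> subterms (pop_ctx X f xs1 xs2 (fst e)) \<or> t \<in> subterms (pop_ctx X f xs1 xs2 (snd e))" for t
    by (simp add: e1_def subterms_eq_def map_eq_def)
  have se: "t \<in> subterms_eq e \<longleftrightarrow> t \<in> subterms (fst e) \<or> t \<in> subterms (snd e)" for t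
    by (simp add: subterms_eq_def)
  have zsx: "x \<in> V \<Longrightarrow> x \<notin> set xs1 \<and> x \<notin> set xs2" for x using zs(3) zs12 by auto
  have Ic: "\<forall>Y x. CApp Y (Var x) \<in> subterms_eq e \<longrightarrow> x \<in> V" using I(1) by (simp add: inv0_def)
  have Iv: "\<forall>x\<in>V. Var x \<in> subterms_eq e \<longrightarrow> groot (sv x) \<notin> G0" using I(1) by (simp add: inv0_def)
  have Id: "\<forall>Y\<in>D. \<forall>a\<in>G0. lastl (sc Y) \<in> G1 \<longrightarrow> CApp Y (Fun a []) \<notin> subterms_eq e" using I(1) by (simp add: inv0_def)
  have inv1: "inv0 ar G1 G0 V C0 T sc' sv' (insert X D) e1"
    unfolding inv0_def
  proof (intro conjI)
    show "wf_subst ar sc' sv'" by (rule wsub')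
    show "gsubst sc' sv' (fst e1) = T" "gsubst sc' sv' (snd e1) = T"
      using gs I(1) by (auto simp: e1_def map_eq_def inv0_def vars_eq_def)
    show "wf_trm ar (fst e1)" "wf_trm ar (snd e1)"
      using I(1) wf_pop[of xs1 xs2 ar f, OF len] by (auto simp: e1_def map_eq_def inv0_def)
    show "\<forall>Y x. CApp Y (Var x) \<in> subterms_eq e1 \<longrightarrow> x \<in> V"
    proof (intro allI impI)
      fix Y x assume h: "CApp Y (Var x) \<in> subterms_eq e1"
      have "CApp Y (Var x) \<in> subterms_eq e"
        using h pop_capp_var[of Y x X f xs1 xs2 "fst e"] pop_capp_var[of Y x X f xs1 xs2 "snd e"]
        unfolding subs1 se by blast
      then show "x \<in> V" using Ic by blast
    qed
    show "\<forall>x\<in>V. Var x \<in> subterms_eq e1 \<longrightarrow> groot (sv' x) \<notin> G0"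
    proof (intro ballI impI)
      fix x assume x: "x \<in> V" "Var x \<in> subterms_eq e1"
      have z: "x \<notin> set xs1" "x \<notin> set xs2" using zsx[OF x(1)] by auto
      have "Var x \<in> subterms_eq e" using x(2) pop_var[OF _ z, of X f "fst e"] pop_var[OF _ z, of X f "snd e"]
        unfolding subs1 se by blast
      moreover have "sv' x = sv x" using sv'(2) x(1) zs(3) by auto
      ultimately show "groot (sv' x) \<notin> G0" using Iv x(1) by auto
    qed
    show "\<forall>Y\<in>insert X D. \<forall>a\<in>G0. lastl (sc' Y) \<in> G1 \<longrightarrow> CApp Y (Fun a []) \<notin> subterms_eq e1"
    proof (intro ballI impI notI)
      fix Y a' assume h: "Y \<in> insert X D" "a' \<in> G0" "lastl (sc' Y) \<in> G1" "CApp Y (Fun a' []) \<in> subterms_eq e1"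
      have af: "a' \<noteq> f" using fa h(2) .
      have "CApp Y (Fun a' []) \<in> subterms_eq e \<and> Y \<noteq> X"
        using h(4) pop_capp_fun[OF _ af, of Y X xs1 xs2 "fst e"] pop_capp_fun[OF _ af, of Y X xs1 xs2 "snd e"]
        unfolding subs1 se by blast
      moreover then have "Y \<in> D" "sc' Y = sc Y" using h(1) by (auto simp: sc'_def)
      ultimately show False using h(2,3) Id by metis
    qed
    show "cvars_eq e1 \<subseteq> C0" using I(1) by (simp add: inv0_def e1_def map_eq_def cvars_eq_def cvars_pop)
  qed
  have chX: "\<forall>s. CApp X s \<in> subterms_eq e1 \<longrightarrow> (\<exists>g ts. s = Fun g ts \<and> g \<notin> G0)"
    using pop_capp_X fG ar unfolding subs1 by fastforce
  have cv1: "cvars_eq e1 = cvars_eq e" by (simp add: e1_def map_eq_def cvars_eq_def cvars_pop)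
  show ?thesis
  proof (cases "C' = Hole")
    case True
    define e2 where "e2 = map_eq (remove_ctx X) e1"
    have "cvar_step ar G1 G0 V X e e2" unfolding cvar_step_def e2_def using ps by blast
    moreover have "inv0 ar G1 G0 V C0 T sc' sv' (insert X D) e2"
      unfolding e2_def using rem_inv0[OF inv1 _ chX] True by (simp add: sc'_def)
    moreover have "ne sc' e2" using I(2) cv1
      by (auto simp: ne_def e2_def map_eq_def cvars_eq_def cvars_rem sc'_def)
    ultimately show ?thesis by blast
  next
    case False
    have "cvar_step ar G1 G0 V X e e1" unfolding cvar_step_def using ps by blast
    moreover have "ne sc' e1" using I(2) cv1 False by (auto simp: ne_def sc'_def)
    ultimately show ?thesis using inv1 by blast
  qed
qed

lemma steps:
  fixes e :: "('f,'v,'c) equation"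
  assumes "inv0 ar G1 G0 V C0 T sc sv D e" "ne sc e" "infinite (UNIV::'v set)" "finite V"
    "\<forall>f\<in>G1. 1 \<le> ar f" "\<forall>a\<in>G0. ar a = 0"
  shows "\<exists>e' sc' sv'. cvar_steps ar G1 G0 V Xs e e' \<and> inv0 ar G1 G0 V C0 T sc' sv' (D \<union> set Xs) e' \<and> ne sc' e'"
  using assms(1,2)
proof (induction Xs arbitrary: e sc sv D)
  case Nil then show ?case by auto
next
  case (Cons X Xs)
  obtain e1 sc1 sv1 where h: "cvar_step ar G1 G0 V X e e1" "inv0 ar G1 G0 V C0 T sc1 sv1 (insert X D) e1" "ne sc1 e1"
    using step[OF Cons.prems assms(3-6)] by blast
  from Cons.IH[OF h(2,3)] obtain e' sc' sv' where
    "cvar_steps ar G1 G0 V Xs e1 e'" "inv0 ar G1 G0 V C0 T sc' sv' (insert X D \<union> set Xs) e'" "ne sc' e'" by blast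
  moreover have "cvar_steps ar G1 G0 V (X#Xs) e e'" using h(1) \<open>cvar_steps ar G1 G0 V Xs e1 e'\<close>
    by (simp only: cvar_steps.simps) blast
  moreover have "insert X D \<union> set Xs = D \<union> set (X#Xs)" by auto
  ultimately show ?case by metis
qed


lemma const_root: "wf_gterm ar g \<Longrightarrow> ar (groot g) = 0 \<Longrightarrow> g = GFun (groot g) []"
  by (cases g) auto

lemma repl_same: assumes "\<forall>x c. \<rho> x = Some c \<longrightarrow> sv x = GFun c []"
  shows "gsubst sc sv (repl_vars \<rho> t) = gsubst sc sv t"
proof -
  have "(\<lambda>x. case \<rho> x of None \<Rightarrow> sv x | Some c \<Rightarrow> GFun c []) = sv"
    using assms by (auto split: option.split)
  then show ?thesis by (simp add: gsubst_repl)
qed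

lemma final_good:
  assumes I: "inv0 ar G1 G0 V C0 T sc sv D e" "ne sc e" "C0 \<subseteq> D" "t = fst e \<or> t = snd e"
    and r: "\<rho>2 = (\<lambda>x. if x \<notin> V \<and> groot (sv x) \<in> G0 then Some (groot (sv x)) else None)"
    and ar: "\<forall>a\<in>G0. ar a = 0"
  shows "good ar G1 G0 sc sv (repl_vars \<rho>2 t)"
proof -
  have Ic: "\<forall>Y x. CApp Y (Var x) \<in> subterms_eq e \<longrightarrow> x \<in> V" using I(1) by (simp add: inv0_def)
  have Iv: "\<forall>x\<in>V. Var x \<in> subterms_eq e \<longrightarrow> groot (sv x) \<notin> G0" using I(1) by (simp add: inv0_def)
  have Id: "\<forall>Y\<in>D. \<forall>a\<in>G0. lastl (sc Y) \<in> G1 \<longrightarrow> CApp Y (Fun a []) \<notin> subterms_eq e" using I(1) by (simp add: inv0_def)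
  have Ico: "cvars_eq e \<subseteq> C0" using I(1) by (simp add: inv0_def)
  have wt: "wf_trm ar t" using I(1,4) by (auto simp: inv0_def)
  have st: "subterms t \<subseteq> subterms_eq e" using I(4) by (auto simp: subterms_eq_def)
  have ct: "cvars t \<subseteq> cvars_eq e" using I(4) by (auto simp: cvars_eq_def)
  show ?thesis unfolding good_def
  proof (intro conjI allI impI)
    show "wf_trm ar (repl_vars \<rho>2 t)" using wt ar r by (intro wf_repl) (auto split: if_splits)
  next
    fix x assume "Var x \<in> subterms (repl_vars \<rho>2 t)"
    then have h: "Var x \<in> subterms t" "\<rho>2 x = None" using repl_var[of x \<rho>2 t] by auto
    show "groot (sv x) \<notin> G0"
    proof (cases "x \<in> V")
      case True
      have "Var x \<in> subterms_eq e" using h(1) st by (rule rev_subsetD)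
      then show ?thesis using Iv[rule_format, OF True] by simp
    next
      case False then show ?thesis using h(2) r by (auto split: if_splits)
    qed
  next
    fix Y s' assume h: "CApp Y s' \<in> subterms (repl_vars \<rho>2 t)"
    then obtain s where s: "CApp Y s \<in> subterms t" "s' = repl_vars \<rho>2 s" using repl_capp[of Y s' \<rho>2 t] by auto
    have "Y \<in> cvars t" using s(1) by (auto simp: cvars_subterms)
    then have Yc: "Y \<in> cvars_eq e" using ct by (rule rev_subsetD)
    then show "sc Y \<noteq> Hole" using I(2) by (simp add: ne_def)
    show "\<forall>a\<in>G0. s' \<noteq> Fun a []" if l: "lastl (sc Y) \<in> G1"
    proof (intro ballI notI)
      fix a assume a: "a \<in> G0" "s' = Fun a []"
      have "repl_vars \<rho>2 s = Fun a []" using a(2) s(2) by simp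
      from repl_Fun0[OF this] show False
      proof
        assume "s = Fun a []"
        then have "CApp Y (Fun a []) \<in> subterms_eq e" using s(1) st by (simp add: subset_iff)
        moreover have "Y \<in> D" using Yc Ico I(3) by (simp add: subset_iff)
        ultimately show False using Id[rule_format, OF _ a(1) l] by simp
      next
        assume "\<exists>x. s = Var x \<and> \<rho>2 x = Some a"
        then obtain x where x: "s = Var x" "\<rho>2 x = Some a" by blast
        then have "CApp Y (Var x) \<in> subterms_eq e" using s(1) st by (simp add: subset_iff)
        then have "x \<in> V" using Ic[rule_format] by simp
        then show False using x(2) r by simp
      qed
    qed
  qed
qed

lemma partB:
  fixes u v :: "('f,'v,'c) trm"
  assumes inf: "infinite (UNIV :: 'v set)"
    and ar: "\<forall>f\<in>G1. 1 \<le> ar f" "\<forall>a\<in>G0. ar a = 0"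
    and wf: "wf_trm ar u" "wf_trm ar v"
    and sol: "is_solution ar sc sv (u, v)" "nonempty_sol sc (u, v)"
  shows "\<exists>u' v' sc' sv'. proc ar G1 G0 (u, v) (u', v') \<and>
                is_solution ar sc' sv' (u', v') \<and> nonempty_sol sc' (u', v') \<and>
                gsubst sc' sv' u' = gsubst sc sv u \<and>
                \<not> (\<exists>f a. f \<in> G1 \<and> a \<in> G0 \<and> crossing_pair ar sc' sv' (u', v') f a)"
proof -
  define e0 where "e0 = (u, v)"
  define V where "V = vars_eq e0"
  define C0 where "C0 = cvars_eq e0"
  define T where "T = gsubst sc sv u"
  have wsub: "wf_subst ar sc sv" and T2: "gsubst sc sv v = T" using sol(1) by (auto simp: is_solution_def T_def)
  define \<rho>1 where "\<rho>1 = (\<lambda>x. if groot (sv x) \<in> G0 then Some (groot (sv x)) else None)"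
  have \<rho>1G: "\<forall>x c. \<rho>1 x = Some c \<longrightarrow> c \<in> G0" by (simp add: \<rho>1_def)
  have \<rho>1ar: "\<forall>x c. \<rho>1 x = Some c \<longrightarrow> ar c = 0" using ar(2) by (simp add: \<rho>1_def)
  have \<rho>1sv: "\<forall>x c. \<rho>1 x = Some c \<longrightarrow> sv x = GFun c []"
  proof (intro allI impI)
    fix x c assume h: "\<rho>1 x = Some c"
    then have "groot (sv x) = c" "c \<in> G0" by (auto simp: \<rho>1_def split: if_splits)
    moreover have "wf_gterm ar (sv x)" using wsub by (simp add: wf_subst_def)
    ultimately show "sv x = GFun c []" using const_root[of ar "sv x"] ar(2) by auto
  qed
  define e1 where "e1 = map_eq (repl_vars \<rho>1) e0"
  have se1: "t \<in> subterms_eq e1 \<longleftrightarrow> t \<in> subterms (repl_vars \<rho>1 u) \<or> t \<in> subterms (repl_vars \<rho>1 v)" for t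
    by (simp add: subterms_eq_def e1_def map_eq_def e0_def)
  have I1: "inv0 ar G1 G0 V C0 T sc sv {} e1"
    unfolding inv0_def
  proof (intro conjI)
    show "wf_subst ar sc sv" by (rule wsub)
    show "gsubst sc sv (fst e1) = T" "gsubst sc sv (snd e1) = T"
      using T2 by (simp_all add: repl_same[OF \<rho>1sv] e1_def map_eq_def e0_def T_def)
    show "wf_trm ar (fst e1)" "wf_trm ar (snd e1)"
      using wf_repl[OF \<rho>1ar wf(1)] wf_repl[OF \<rho>1ar wf(2)] by (simp_all add: e1_def map_eq_def e0_def)
    show "\<forall>Y x. CApp Y (Var x) \<in> subterms_eq e1 \<longrightarrow> x \<in> V"
    proof (intro allI impI)
      fix Y x assume "CApp Y (Var x) \<in> subterms_eq e1"
      then have "Var x \<in> subterms_eq e1" using sub_capp[of Y "Var x" "repl_vars \<rho>1 u"] sub_capp[of Y "Var x" "repl_vars \<rho>1 v"] unfolding se1 by blast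
      then have "Var x \<in> subterms u \<or> Var x \<in> subterms v" using repl_var[of x \<rho>1 u] repl_var[of x \<rho>1 v] unfolding se1 by blast
      then show "x \<in> V" by (auto simp: V_def vars_eq_def e0_def vars_subterms)
    qed
    show "\<forall>x\<in>V. Var x \<in> subterms_eq e1 \<longrightarrow> groot (sv x) \<notin> G0"
    proof (intro ballI impI)
      fix x assume "Var x \<in> subterms_eq e1"
      then have "\<rho>1 x = None" using repl_var[of x \<rho>1 u] repl_var[of x \<rho>1 v] unfolding se1 by blast
      then show "groot (sv x) \<notin> G0" by (simp add: \<rho>1_def split: if_splits)
    qed
    show "\<forall>Y\<in>{}. \<forall>a\<in>G0. lastl (sc Y) \<in> G1 \<longrightarrow> CApp Y (Fun a []) \<notin> subterms_eq e1" by simp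
    show "cvars_eq e1 \<subseteq> C0" by (simp add: e1_def C0_def cvars_eq_def map_eq_def cvars_repl)
  qed
  have cve1: "cvars_eq e1 = C0" by (simp add: e1_def C0_def cvars_eq_def map_eq_def cvars_repl)
  have ne1: "ne sc e1" using sol(2) cve1 by (simp add: ne_def nonempty_sol_def C0_def e0_def)
  have finV: "finite V" by (simp add: V_def vars_eq_def finite_vars)
  have "finite C0" by (simp add: C0_def cvars_eq_def finite_cvars)
  then obtain Xs where Xs: "distinct Xs" "set Xs = C0" using finite_distinct_list by blast
  obtain e2 sc2 sv2 where st: "cvar_steps ar G1 G0 V Xs e1 e2" "inv0 ar G1 G0 V C0 T sc2 sv2 ({} \<union> set Xs) e2" "ne sc2 e2"
    using steps[OF I1 ne1 inf finV ar] by blast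
  define \<rho>2 where "\<rho>2 = (\<lambda>x. if x \<notin> V \<and> groot (sv2 x) \<in> G0 then Some (groot (sv2 x)) else None)"
  define u' where "u' = repl_vars \<rho>2 (fst e2)"
  define v' where "v' = repl_vars \<rho>2 (snd e2)"
  have wsub2: "wf_subst ar sc2 sv2" using st(2) by (simp add: inv0_def)
  have \<rho>2sv: "\<forall>x c. \<rho>2 x = Some c \<longrightarrow> sv2 x = GFun c []"
  proof (intro allI impI)
    fix x c assume h: "\<rho>2 x = Some c"
    then have "groot (sv2 x) = c" "c \<in> G0" by (auto simp: \<rho>2_def split: if_splits)
    moreover have "wf_gterm ar (sv2 x)" using wsub2 by (simp add: wf_subst_def)
    ultimately show "sv2 x = GFun c []" using const_root[of ar "sv2 x"] ar(2) by auto
  qed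
  have pr: "proc ar G1 G0 (u, v) (u', v')"
    unfolding proc_def
    apply (rule exI[of _ \<rho>1], rule exI[of _ \<rho>2], rule exI[of _ Xs], rule exI[of _ e2])
  proof (intro conjI)
    show "\<forall>x c. \<rho>1 x = Some c \<longrightarrow> c \<in> G0" by (rule \<rho>1G)
    show "distinct Xs" by (rule Xs(1))
    show "set Xs = cvars_eq (u, v)" using Xs(2) by (simp add: C0_def e0_def)
    show "cvar_steps ar G1 G0 (vars_eq (u, v)) Xs (map_eq (repl_vars \<rho>1) (u, v)) e2"
      using st(1) by (simp add: V_def e0_def e1_def)
    show "\<forall>x c. \<rho>2 x = Some c \<longrightarrow> c \<in> G0" by (simp add: \<rho>2_def)
    show "\<forall>x\<in>vars_eq (u, v). \<rho>2 x = None" by (simp add: \<rho>2_def V_def e0_def)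
    show "(u', v') = map_eq (repl_vars \<rho>2) e2" by (simp add: u'_def v'_def map_eq_def)
  qed
  have gu: "gsubst sc2 sv2 u' = T" "gsubst sc2 sv2 v' = T"
    using st(2) by (simp_all add: repl_same[OF \<rho>2sv] inv0_def u'_def v'_def)
  have isol: "is_solution ar sc2 sv2 (u', v')" using wsub2 gu by (simp add: is_solution_def)
  have nes: "nonempty_sol sc2 (u', v')" using st(3)
    by (simp add: nonempty_sol_def ne_def cvars_eq_def u'_def v'_def cvars_repl)
  have C0D: "C0 \<subseteq> {} \<union> set Xs" using Xs by simp
  have g1: "good ar G1 G0 sc2 sv2 u'" unfolding u'_def
    using final_good[OF st(2) st(3) C0D disjI1[OF refl] \<rho>2_def ar(2)] .
  have g2: "good ar G1 G0 sc2 sv2 v'" unfolding v'_def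
    using final_good[OF st(2) st(3) C0D disjI2[OF refl] \<rho>2_def ar(2)] .
  have nc: "\<not> (\<exists>f a. f \<in> G1 \<and> a \<in> G0 \<and> crossing_pair ar sc2 sv2 (u', v') f a)"
    using no_crossing_occ[OF g1 wsub2 ar] no_crossing_occ[OF g2 wsub2 ar]
    by (auto simp: crossing_pair_def)
  have gu1: "gsubst sc2 sv2 u' = gsubst sc sv u" using gu(1) by (simp add: T_def)
  show ?thesis
    apply (rule exI[of _ u'], rule exI[of _ v'], rule exI[of _ sc2], rule exI[of _ sv2])
    using pr isol nes gu1 nc by (intro conjI)
qed

theorem lemma5p3:
  fixes ar :: "'f \<Rightarrow> nat" and G1 G0 :: "'f set" and u v :: "('f,'v,'c) trm"
  assumes "infinite (UNIV :: 'v set)"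
    and "\<forall>f\<in>G1. 1 \<le> ar f" and "\<forall>a\<in>G0. ar a = 0"
    and "wf_trm ar u" and "wf_trm ar v"
  shows "(\<forall>u' v'. proc ar G1 G0 (u, v) (u', v') \<longrightarrow>
             (\<exists>sc' sv'. is_solution ar sc' sv' (u', v')) \<longrightarrow>
             (\<exists>sc sv. is_solution ar sc sv (u, v)))
       \<and> (\<forall>sc sv. is_solution ar sc sv (u, v) \<and> nonempty_sol sc (u, v) \<longrightarrow>
             (\<exists>u' v' sc' sv'. proc ar G1 G0 (u, v) (u', v') \<and>
                is_solution ar sc' sv' (u', v') \<and> nonempty_sol sc' (u', v') \<and>
                gsubst sc' sv' u' = gsubst sc sv u \<and>
                \<not> (\<exists>f a. f \<in> G1 \<and> a \<in> G0 \<and> crossing_pair ar sc' sv' (u', v') f a)))"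
proof (intro conjI allI impI)
  fix u' v' assume "proc ar G1 G0 (u, v) (u', v')" "\<exists>sc' sv'. is_solution ar sc' sv' (u', v')"
  then show "\<exists>sc sv. is_solution ar sc sv (u, v)" using partA assms(3) by blast
next
  fix sc sv assume "is_solution ar sc sv (u, v) \<and> nonempty_sol sc (u, v)"
  then show "\<exists>u' v' sc' sv'. proc ar G1 G0 (u, v) (u', v') \<and>
                is_solution ar sc' sv' (u', v') \<and> nonempty_sol sc' (u', v') \<and>
                gsubst sc' sv' u' = gsubst sc sv u \<and>
                \<not> (\<exists>f a. f \<in> G1 \<and> a \<in> G0 \<and> crossing_pair ar sc' sv' (u', v') f a)"
    using partB[OF assms] by blast
qed

end
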